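(* Assume the setup in the context and suppose $K\le n-4$. Then $T=K$ on the event $\{\epsilon_1=\epsilon_2=\cdots=\epsilon_K\}$ (which has probability $2^{1-K}$), and $T\ge K+2$ on its complement. Moreover, if $K=n-3$, then still $P(T=K)=2^{1-K}$ and $T\ge K+1$ on the complement of $\{T=K\}$.
   Context: Let $n\ge4$ and let $v_1,\dots,v_n$ be real numbers with $\sum_{i=1}^n v_i^2\le1$ ordered so that $v_n\ge v_1\ge v_{n-1}\ge v_2\ge v_3\ge\cdots\ge v_{n-2}\ge0$. Let $\epsilon_1,\dots,\epsilon_n$ be independent Rademacher random variables ($\pm1$ with probability $\tfrac12$ each). For $t\in\{1,\dots,n-1\}$ put $X_t:=\sum_{i=1}^t v_i\epsilon_i$, and for $t\in\{1,\dots,n\}$ put $M_t:=\sum_{i=1}^t v_i$. Define the random time $T:=\min\big(\{t\le n-1: |X_t|>1-v_{t+1}\}\cup\{n-1\}\big)$ and the deterministic index $K:=\min\big(\{t\le n-1: M_t>1-v_{t+1}\}\cup\{n-1\}\big)$. *)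

theory Defs
  imports "HOL-Probability.Probability"
begin

text \<open>Sign vectors (epsilon_1,...,epsilon_n), each entry in {-1,1}; the uniform
distribution on this set is exactly the law of n independent Rademacher variables.\<close>
definition signs :: "nat \<Rightarrow> (nat \<Rightarrow> real) set" where
  "signs n = PiE {1..n} (\<lambda>_. {-1, 1})"

definition rademacher :: "nat \<Rightarrow> (nat \<Rightarrow> real) pmf" where
  "rademacher n = pmf_of_set (signs n)"

definition Xs :: "(nat \<Rightarrow> real) \<Rightarrow> (nat \<Rightarrow> real) \<Rightarrow> nat \<Rightarrow> real" where
  "Xs v e t = (\<Sum>i = 1..t. v i * e i)"

definition Ms :: "(nat \<Rightarrow> real) \<Rightarrow> nat \<Rightarrow> real" where
  "Ms v t = (\<Sum>i = 1..t. v i)"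

definition stopT :: "nat \<Rightarrow> (nat \<Rightarrow> real) \<Rightarrow> (nat \<Rightarrow> real) \<Rightarrow> nat" where
  "stopT n v e = Min ({t \<in> {1..n-1}. \<bar>Xs v e t\<bar> > 1 - v (t+1)} \<union> {n-1})"

definition idxK :: "nat \<Rightarrow> (nat \<Rightarrow> real) \<Rightarrow> nat" where
  "idxK n v = Min ({t \<in> {1..n-1}. Ms v t > 1 - v (t+1)} \<union> {n-1})"

end

theory Submission
  imports Defs
begin
lemma signs_fin: "finite (signs n)" "signs n \<noteq> {}"
  unfolding signs_def by (auto simp: finite_PiE PiE_eq_empty_iff)
lemma card_signs: "card (signs n) = 2^n"
  unfolding signs_def by (simp add: card_PiE numeral_2_eq_2)

lemma card_ev:
  assumes "1 \<le> K" "K \<le> n"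
  shows "card (signs n \<inter> {e. \<forall>i\<in>{1..K}. e i = e 1}) = 2 * 2^(n-K)"
proof -
  define F where "F s = PiE {1..n} (\<lambda>i. if i \<le> K then {s} else {-1,1::real})" for s
  have eq: "signs n \<inter> {e. \<forall>i\<in>{1..K}. e i = e 1} = F (-1) \<union> F 1"
  proof (intro set_eqI iffI)
    fix e assume a: "e \<in> signs n \<inter> {e. \<forall>i\<in>{1..K}. e i = e 1}"
    have es: "e \<in> PiE {1..n} (\<lambda>_. {-1,1::real})" using IntD1[OF a] unfolding signs_def .
    have eq1: "\<forall>i\<in>{1..K}. e i = e 1" using IntD2[OF a] by blast
    have "1 \<in> {1..n}" using assms by simp
    then have e1: "e 1 \<in> {-1,1}" using PiE_mem[OF es] by blast
    have ext: "e \<in> extensional {1..n}" using es unfolding PiE_iff by blast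
    have "\<forall>i\<in>{1..n}. e i \<in> (if i \<le> K then {e 1} else {-1,1})"
    proof
      fix i assume i: "i \<in> {1..n}"
      show "e i \<in> (if i \<le> K then {e 1} else {-1,1})"
      proof (cases "i \<le> K")
        case True
        then have "i \<in> {1..K}" using i by simp
        then have "e i = e 1" using eq1 by blast
        then show ?thesis using True by simp
      next
        case False then show ?thesis using PiE_mem[OF es i] by simp
      qed
    qed
    then have "e \<in> F (e 1)" unfolding F_def using ext by (simp add: PiE_iff)
    then show "e \<in> F (-1) \<union> F 1" using e1 by auto
  next
    fix e assume a: "e \<in> F (-1) \<union> F 1"
    then obtain s where s: "s = -1 \<or> s = 1" and ef: "e \<in> F s" by auto
    have ext: "e \<in> extensional {1..n}" using ef unfolding F_def PiE_iff by blast
    have m: "e i \<in> (if i \<le> K then {s} else {-1,1})" if "i \<in> {1..n}" for i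
      using PiE_mem[OF ef[unfolded F_def] that] .
    have "e i \<in> {-1,1}" if "i \<in> {1..n}" for i
      using m[OF that] s by (cases "i \<le> K") auto
    then have "e \<in> signs n" unfolding signs_def using ext by (simp add: PiE_iff)
    moreover have "e i = e 1" if "i \<in> {1..K}" for i
    proof -
      have "e i = s" using m[of i] that assms by simp
      moreover have "e 1 = s" using m[of 1] assms by simp
      ultimately show ?thesis by simp
    qed
    ultimately show "e \<in> signs n \<inter> {e. \<forall>i\<in>{1..K}. e i = e 1}" by blast
  qed
  have cF: "card (F s) = 2^(n-K)" for s
  proof -
    have "card (F s) = (\<Prod>i\<in>{1..n}. card (if i \<le> K then {s} else {-1,1::real}))"
      unfolding F_def by (simp add: card_PiE)
    also have "\<dots> = (\<Prod>i\<in>{1..n}. if i \<le> K then 1 else 2)"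
      by (intro prod.cong) auto
    also have "\<dots> = (\<Prod>i\<in>{1..K}. 1) * (\<Prod>i\<in>{K<..n}. 2::nat)"
    proof -
      have u: "{1..n} = {1..K} \<union> {K<..n}" using assms by auto
      have "(\<Prod>i\<in>{1..n}. if i \<le> K then 1 else 2) = (\<Prod>i\<in>{1..K}. if i \<le> K then 1 else (2::nat)) * (\<Prod>i\<in>{K<..n}. if i \<le> K then 1 else 2)"
        unfolding u by (rule prod.union_disjoint) auto
      also have "\<dots> = (\<Prod>i\<in>{1..K}. 1) * (\<Prod>i\<in>{K<..n}. 2::nat)"
        by (intro arg_cong2[where f="(*)"] prod.cong) auto
      finally show ?thesis .
    qed
    also have "\<dots> = 2^(n-K)" by simp
    finally show ?thesis .
  qed
  have "F (-1) \<inter> F 1 = {}"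
  proof (rule ccontr)
    assume "F (-1) \<inter> F 1 \<noteq> {}"
    then obtain e where "e \<in> F (-1)" "e \<in> F 1" by auto
    then have "e 1 \<in> {-1}" "e 1 \<in> {1}" using assms unfolding F_def
      by (auto dest!: PiE_mem[where x=1])
    then show False by simp
  qed
  moreover have "finite (F s)" for s unfolding F_def by (rule finite_PiE) auto
  ultimately show ?thesis unfolding eq by (simp add: card_Un_disjoint cF)
qed

lemma prob_ev:
  assumes "1 \<le> K" "K \<le> n" "signs n \<inter> X = signs n \<inter> {e. \<forall>i\<in>{1..K}. e i = e 1}"
  shows "measure_pmf.prob (rademacher n) X = 2 powr (1 - real K)"
proof -
  have "measure_pmf.prob (rademacher n) X = card (signs n \<inter> X) / card (signs n)"
    unfolding rademacher_def using signs_fin by (simp add: measure_pmf_of_set)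
  also have "\<dots> = 2 * 2^(n-K) / 2^n" using assms card_ev card_signs by simp
  also have "\<dots> = 2 / 2^K"
  proof -
    have "(2::real)^n = 2^(n-K) * 2^K" using assms by (simp add: power_add[symmetric])
    then show ?thesis by simp
  qed
  also have "\<dots> = 2 powr (1 - real K)"
    by (simp add: powr_diff powr_realpow)
  finally show ?thesis .
qed

lemma chain:
  fixes n i j :: nat
  assumes o4: "\<And>i. 2 \<le> i \<Longrightarrow> i < n - 2 \<Longrightarrow> v (i+1) \<le> v i"
    and "2 \<le> i" "i \<le> j" "j \<le> n-2"
  shows "v j \<le> (v i::real)"
  using assms(3,4)
proof (induction j rule: dec_induct)
  case base then show ?case by simp
next
  case (step m) then show ?case using o4[of m] assms(2) by simp
qed

lemma XM:
  assumes e: "e \<in> signs n" and t: "t \<le> n" and vn: "\<forall>i\<in>{1..n}. 0 \<le> v i"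
  shows "\<And>j. j \<in> {1..t} \<Longrightarrow> v j * (1 - e j) \<le> Ms v t - Xs v e t"
    and "\<And>j. j \<in> {1..t} \<Longrightarrow> v j * (1 + e j) \<le> Ms v t + Xs v e t"
    and "\<bar>Xs v e t\<bar> \<le> Ms v t"
proof -
  have ev: "e i \<in> {-1,1}" if "i \<in> {1..t}" for i
  proof -
    have "i \<in> {1..n}" using that t by simp
    then show ?thesis using PiE_mem[OF e[unfolded signs_def]] by blast
  qed
  have nn1: "0 \<le> v i * (1 - e i)" "0 \<le> v i * (1 + e i)" if "i \<in> {1..t}" for i
  proof -
    have "i \<in> {1..n}" using that t by simp
    then have "0 \<le> v i" using vn by blast
    moreover have "e i = -1 \<or> e i = 1" using ev[OF that] by simp
    ultimately show "0 \<le> v i * (1 - e i)" "0 \<le> v i * (1 + e i)" by auto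
  qed
  have d1: "Ms v t - Xs v e t = (\<Sum>i=1..t. v i * (1 - e i))"
    unfolding Ms_def Xs_def by (simp add: sum_subtractf right_diff_distrib)
  have d2: "Ms v t + Xs v e t = (\<Sum>i=1..t. v i * (1 + e i))"
    unfolding Ms_def Xs_def by (simp add: sum.distrib distrib_left)
  show "v j * (1 - e j) \<le> Ms v t - Xs v e t" if "j \<in> {1..t}" for j
    unfolding d1 by (rule member_le_sum) (use that nn1 in auto)
  show "v j * (1 + e j) \<le> Ms v t + Xs v e t" if "j \<in> {1..t}" for j
    unfolding d2 by (rule member_le_sum) (use that nn1 in auto)
  have "0 \<le> Ms v t - Xs v e t" unfolding d1 by (rule sum_nonneg) (use nn1 in auto)
  moreover have "0 \<le> Ms v t + Xs v e t" unfolding d2 by (rule sum_nonneg) (use nn1 in auto)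
  ultimately show "\<bar>Xs v e t\<bar> \<le> Ms v t" by linarith
qed

theorem mainTheorem7:
  fixes n :: nat and v :: "nat \<Rightarrow> real"
  assumes n4: "n \<ge> 4"
    and sq: "(\<Sum>i = 1..n. (v i)\<^sup>2) \<le> 1"
    and o1: "v 1 \<le> v n"
    and o2: "v (n-1) \<le> v 1"
    and o3: "v 2 \<le> v (n-1)"
    and o4: "\<And>i. 2 \<le> i \<Longrightarrow> i < n - 2 \<Longrightarrow> v (i+1) \<le> v i"
    and o5: "0 \<le> v (n-2)"
  shows
    "(idxK n v \<le> n - 4 \<longrightarrow>
        (\<forall>e \<in> signs n. (\<forall>i \<in> {1..idxK n v}. e i = e 1) \<longrightarrow> stopT n v e = idxK n v)
      \<and> (\<forall>e \<in> signs n. \<not> (\<forall>i \<in> {1..idxK n v}. e i = e 1) \<longrightarrow> stopT n v e \<ge> idxK n v + 2)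
      \<and> measure_pmf.prob (rademacher n) {e. \<forall>i \<in> {1..idxK n v}. e i = e 1}
          = 2 powr (1 - real (idxK n v)))
   \<and> (idxK n v = n - 3 \<longrightarrow>
        measure_pmf.prob (rademacher n) {e. stopT n v e = idxK n v} = 2 powr (1 - real (idxK n v))
      \<and> (\<forall>e \<in> signs n. stopT n v e \<noteq> idxK n v \<longrightarrow> stopT n v e \<ge> idxK n v + 1))"
proof -
  define K where "K = idxK n v"
  define KS where "KS = {t \<in> {1..n-1}. Ms v t > 1 - v (t+1)}"
  have K_def': "K = Min (KS \<union> {n-1})" unfolding K_def KS_def idxK_def by simp
  have finKS: "finite (KS \<union> {n-1})" unfolding KS_def by auto
  have Kin: "K \<in> KS \<union> {n-1}" unfolding K_def' using finKS by (intro Min_in) auto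
  have Kle: "K \<le> n-1" unfolding K_def' using finKS by (intro Min_le) auto
  have K1: "1 \<le> K" using Kin n4 unfolding KS_def by auto
  have Kbelow: "Ms v t \<le> 1 - v (t+1)" if "1 \<le> t" "t < K" for t
  proof (rule ccontr)
    assume "\<not> ?thesis"
    then have "t \<in> KS" using that Kle unfolding KS_def by auto
    then have "K \<le> t" unfolding K_def' using finKS by (intro Min_le) auto
    with that show False by simp
  qed
  have Khit: "Ms v K > 1 - v (K+1)" if "K < n-1" using Kin that unfolding KS_def by auto
  have ch: "v j \<le> v i" if "2 \<le> i" "i \<le> j" "j \<le> n-2" for i j using chain[of n v i j, OF o4 that] by blast
  have vn: "\<forall>i\<in>{1..n}. 0 \<le> v i"
  proof
    fix i assume i: "i \<in> {1..n}"
    have n22: "2 \<le> n-2" using n4 by linarith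
    have v2: "0 \<le> v 2" using ch[of 2 "n-2"] n22 o5 by simp
    show "0 \<le> v i"
    proof (cases "2 \<le> i \<and> i \<le> n-2")
      case True then show ?thesis using ch[of i "n-2"] o5 by simp
    next
      case False
      then have "i = 1 \<or> i = n-1 \<or> i = n" using i n4 by auto
      then show ?thesis using v2 o1 o2 o3 by auto
    qed
  qed
  have vle1: "v j \<le> v 1" if "2 \<le> j" "j \<le> n-2" for j using ch[of 2 j] that o2 o3 by simp
  define A where "A = {e. \<forall>i\<in>{1..K}. e i = (e 1::real)}"
  define TS where "TS e = {t \<in> {1..n-1}. \<bar>Xs v e t\<bar> > 1 - v (t+1)}" for e
  have T_def': "stopT n v e = Min (TS e \<union> {n-1})" for e unfolding TS_def stopT_def by simp
  have finTS: "finite (TS e \<union> {n-1})" for e unfolding TS_def by auto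
  have Tge: "stopT n v e \<ge> m" if "\<forall>t\<in>TS e. m \<le> t" "m \<le> n-1" for e m
    unfolding T_def' using finTS that by (subst Min_ge_iff) auto
  have Tle: "stopT n v e \<le> t" if "t \<in> TS e" for e t
    unfolding T_def' using finTS that by (intro Min_le) auto
  have evs: "e i = -1 \<or> e i = 1" if "e \<in> signs n" "i \<in> {1..n}" for e i
    using PiE_mem[OF that(1)[unfolded signs_def] that(2)] by simp
  have TSK: "K \<le> t" if e: "e \<in> signs n" and t: "t \<in> TS e" for e t
  proof (rule ccontr)
    assume "\<not> K \<le> t"
    then have "Ms v t \<le> 1 - v (t+1)" using Kbelow t unfolding TS_def by auto
    moreover have "\<bar>Xs v e t\<bar> \<le> Ms v t" using XM(3)[OF e _ vn, of t] t unfolding TS_def by auto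
    ultimately show False using t unfolding TS_def by auto
  qed
  have TgeK: "stopT n v e \<ge> K" if e: "e \<in> signs n" for e
    using TSK[OF e] Kle by (intro Tge) auto
  have Tall: "stopT n v e = K" if e: "e \<in> signs n" and eA: "e \<in> A" and Kn: "K < n-1" for e
  proof -
    have e1: "e 1 = -1 \<or> e 1 = 1" using evs[OF e, of 1] n4 by simp
    have XK: "Xs v e K = e 1 * Ms v K" unfolding Xs_def Ms_def sum_distrib_left
    proof (rule sum.cong)
      fix i assume "i \<in> {1..K}"
      then have "e i = e 1" using eA unfolding A_def by blast
      then show "v i * e i = e 1 * v i" by simp
    qed simp
    have M0: "0 \<le> Ms v K" using XM(3)[OF e _ vn, of K] Kle by linarith
    have "\<bar>Xs v e K\<bar> = Ms v K" unfolding XK using e1 M0 by (elim disjE) simp_all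
    then have "K \<in> TS e" using Khit[OF Kn] K1 Kle unfolding TS_def by auto
    then show ?thesis using Tle[of K e] TgeK[OF e] by simp
  qed
  have K2: "2 \<le> K" if "e \<notin> A" for e
    using that K1 unfolding A_def by (cases "K = 1") auto
  have Tnot: "\<bar>Xs v e K\<bar> \<le> 1 - 2 * v K" if e: "e \<in> signs n" and eA: "e \<notin> A" and Kn: "K \<le> n-3" for e
  proof -
    obtain j where j: "j \<in> {1..K}" "e j \<noteq> e 1" using eA unfolding A_def by auto
    have j2: "2 \<le> j" using j by (cases "j = 1") auto
    have e1: "e 1 = -1 \<or> e 1 = 1" using evs[OF e, of 1] n4 by simp
    have jn: "j \<le> n" using j(1) Kn by auto
    have ej: "e j = -1 \<or> e j = 1" using evs[OF e, of j] j(1) jn by simp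
    have sg: "(e 1 = 1 \<and> e j = -1) \<or> (e 1 = -1 \<and> e j = 1)" using e1 ej j(2) by auto
    have vj: "v j \<le> v 1" using vle1[OF j2] j Kn by auto
    have vK: "v K \<le> v j" using ch[of j K] j2 j Kn by auto
    have a1: "v j * (1 - e j) \<le> Ms v K - Xs v e K" using XM(1)[OF e _ vn j(1)] Kn by auto
    have a2: "v j * (1 + e j) \<le> Ms v K + Xs v e K" using XM(2)[OF e _ vn j(1)] Kn by auto
    have b1: "v 1 * (1 - e 1) \<le> Ms v K - Xs v e K" using XM(1)[OF e _ vn, of K 1] Kn K1 by auto
    have b2: "v 1 * (1 + e 1) \<le> Ms v K + Xs v e K" using XM(2)[OF e _ vn, of K 1] Kn K1 by auto
    have X: "\<bar>Xs v e K\<bar> \<le> Ms v K - 2 * v K"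
      using sg
    proof (elim disjE conjE)
      assume "e 1 = 1" "e j = -1"
      then have "2 * v j \<le> Ms v K - Xs v e K" "2 * v 1 \<le> Ms v K + Xs v e K" using a1 b2 by simp_all
      then show ?thesis using vj vK unfolding abs_le_iff by (intro conjI; linarith)
    next
      assume "e 1 = -1" "e j = 1"
      then have "2 * v j \<le> Ms v K + Xs v e K" "2 * v 1 \<le> Ms v K - Xs v e K" using a2 b1 by simp_all
      then show ?thesis using vj vK unfolding abs_le_iff by (intro conjI; linarith)
    qed
    obtain m where m: "K = Suc m" using K1 by (cases K) auto
    have "Ms v K = Ms v m + v K" unfolding m Ms_def by (simp add: sum.cl_ivl_Suc)
    moreover have "Ms v m \<le> 1 - v K" using Kbelow[of m] m K2[OF eA] by simp
    ultimately show ?thesis using X by linarith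
  qed
  have XS: "Xs v e (K+1) = Xs v e K + v (K+1) * e (K+1)" for e
    unfolding Xs_def by (simp add: sum.cl_ivl_Suc)
  have notK: "K \<notin> TS e" if e: "e \<in> signs n" and eA: "e \<notin> A" and Kn: "K \<le> n-3" for e
  proof -
    have "v (K+1) \<le> v K" using ch[of K "K+1"] K2[OF eA] Kn n4 by auto
    moreover have "0 \<le> v K" using vn K1 Kn by auto
    ultimately show ?thesis using Tnot[OF that] unfolding TS_def by auto
  qed
  have KK: "idxK n v = K" by (simp add: K_def)
  show ?thesis unfolding KK
  proof (intro conjI impI)
    assume Kn: "K \<le> n-4"
    show "\<forall>e\<in>signs n. (\<forall>i\<in>{1..K}. e i = e 1) \<longrightarrow> stopT n v e = K"
    proof (intro ballI impI)
      fix e assume e: "e \<in> signs n" and a: "\<forall>i\<in>{1..K}. e i = e 1"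
      then have "e \<in> A" unfolding A_def by blast
      moreover have "K < n-1" using Kn n4 by linarith
      ultimately show "stopT n v e = K" using Tall[OF e] by blast
    qed
    show "\<forall>e\<in>signs n. \<not> (\<forall>i\<in>{1..K}. e i = e 1) \<longrightarrow> K + 2 \<le> stopT n v e"
    proof (intro ballI impI)
      fix e assume e: "e \<in> signs n" and ne: "\<not> (\<forall>i\<in>{1..K}. e i = e 1)"
      then have eA: "e \<notin> A" unfolding A_def by blast
      have Kn3: "K \<le> n-3" using Kn by simp
      have X: "\<bar>Xs v e K\<bar> \<le> 1 - 2 * v K" using Tnot[OF e eA Kn3] .
      have "K+1 \<in> {1..n}" using Kn n4 by simp
      then have eK: "e (K+1) = -1 \<or> e (K+1) = 1" using evs[OF e, of "K+1"] by blast
      have c1: "v (K+1) \<le> v K" using ch[of K "K+1"] K2[OF eA] Kn n4 by auto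
      have c2: "v (K+2) \<le> v (K+1)" using ch[of "K+1" "K+2"] K2[OF eA] Kn n4 by auto
      have c0: "0 \<le> v (K+1)" using vn \<open>K+1 \<in> {1..n}\<close> by blast
      have X1: "\<bar>Xs v e (K+1)\<bar> \<le> 1 - v (K+2)"
        using eK
      proof (elim disjE)
        assume "e (K+1) = -1" then show ?thesis unfolding XS using X c1 c2 c0 unfolding abs_le_iff by (intro conjI; simp; linarith)
      next
        assume "e (K+1) = 1" then show ?thesis unfolding XS using X c1 c2 c0 unfolding abs_le_iff by (intro conjI; simp; linarith)
      qed
      have "K+1 \<notin> TS e" using X1 unfolding TS_def by (auto simp: add.assoc)
      have "K \<notin> TS e" using notK[OF e eA Kn3] .
      note * = this
      have "\<forall>t\<in>TS e. K+2 \<le> t"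
      proof (intro ballI)
        fix t assume t: "t \<in> TS e"
        have "K \<le> t" using TSK[OF e t] .
        moreover have "t \<noteq> K" "t \<noteq> K+1" using t \<open>K \<notin> TS e\<close> \<open>K+1 \<notin> TS e\<close> by auto
        ultimately show "K+2 \<le> t" by linarith
      qed
      then show "K + 2 \<le> stopT n v e" using Kn n4 by (intro Tge) auto
    qed
    show "measure_pmf.prob (rademacher n) {e. \<forall>i\<in>{1..K}. e i = e 1} = 2 powr (1 - real K)"
      using prob_ev[OF K1 _ refl] Kle by simp
  next
    assume Kn: "K = n-3"
    have SE: "signs n \<inter> {e. stopT n v e = K} = signs n \<inter> A"
    proof (intro set_eqI iffI)
      fix e assume "e \<in> signs n \<inter> {e. stopT n v e = K}"
      then have e: "e \<in> signs n" and T: "stopT n v e = K" by auto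
      show "e \<in> signs n \<inter> A"
      proof (rule ccontr)
        assume "e \<notin> signs n \<inter> A"
        then have eA: "e \<notin> A" using e by auto
        have "\<forall>t\<in>TS e. K+1 \<le> t"
        proof (intro ballI)
          fix t assume t: "t \<in> TS e"
          have "K \<le> t" using TSK[OF e t] .
          moreover have "t \<noteq> K" using t notK[OF e eA] Kn by auto
          ultimately show "K+1 \<le> t" by linarith
        qed
        then have "stopT n v e \<ge> K+1" using Kn n4 by (intro Tge) auto
        with T show False by simp
      qed
    next
      fix e assume "e \<in> signs n \<inter> A"
      then have e: "e \<in> signs n" and eA: "e \<in> A" by auto
      have "K < n-1" using Kn n4 by linarith
      then show "e \<in> signs n \<inter> {e. stopT n v e = K}" using Tall[OF e eA] e by simp
    qed
    show "measure_pmf.prob (rademacher n) {e. stopT n v e = K} = 2 powr (1 - real K)"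
      using prob_ev[OF K1 _ SE[unfolded A_def]] Kle by simp
    show "\<forall>e\<in>signs n. stopT n v e \<noteq> K \<longrightarrow> K + 1 \<le> stopT n v e"
    proof (intro ballI impI)
      fix e assume e: "e \<in> signs n" and "stopT n v e \<noteq> K"
      then show "K + 1 \<le> stopT n v e" using TgeK[OF e] by linarith
    qed
  qed
qed

end
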